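(* Let $\tau_0,\tau_1,\dots,\tau_r$ ($1\le r\le n$) be $\mathbb Z$-linearly independent elements of $G_t$ such that $\tau_0\in G_t\setminus G$ and $\tau_1,\dots,\tau_r\in G$. Then there exists a $\mathbb K$-automorphism $\varphi$ of $\mathbb K(t,\mathbf x)$ such that $\varphi\circ\tau_0=\sigma_t\circ\varphi$ and $\varphi\circ\tau_i=\sigma_{x_i}\circ\varphi$ for all $i=1,\dots,r$. Furthermore, for any $f\in\mathbb K(t,\mathbf x)$, $f$ has a telescoper of type $(\tau_0;\tau_1,\dots,\tau_r)$ if and only if $\varphi(f)$ has a telescoper of type $(\sigma_t;\sigma_{x_1},\dots,\sigma_{x_r})$.
   Context: $\mathbb K$ is a field of characteristic zero, $\mathbf x=(x_1,\dots,x_m)$, $1\le n\le m$; $\sigma_t,\sigma_{x_i}$ are the $\mathbb K$-automorphisms of $\mathbb K(t,\mathbf x)$ shifting $t$, resp. $x_i$, by $1$ and fixing the other variables. $G=\langle\sigma_{x_1},\dots,\sigma_{x_n}\rangle$, $G_t=\langle\sigma_t,\sigma_{x_1},\dots,\sigma_{x_n}\rangle$. Elements are $\mathbb Z$-linearly independent if $\tau_0^{c_0}\cdots\tau_r^{c_r}=\mathbf 1$ with $c_i\in\mathbb Z$ forces all $c_i=0$. For $\tau\in G_t$, $\Delta_\tau(g)=\tau(g)-g$; $g$ is $(\tau_1,\dots,\tau_r)$-summable in $\mathbb K(t,\mathbf x)$ if $g=\sum_{i=1}^r\Delta_{\tau_i}(h_i)$ with $h_i\in\mathbb K(t,\mathbf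 x)$. For $\tau_0\in G_t\setminus G$ (i.e. $\tau_0$ involves a nonzero power of $\sigma_t$), a telescoper of type $(\tau_0;\tau_1,\dots,\tau_r)$ for $f$ is a nonzero operator $L=\sum_{\ell=0}^\rho e_\ell T_0^\ell$ with $e_\ell\in\mathbb K(t)$, where $T_0$ acts as $\tau_0$, such that $L(f):=\sum_\ell e_\ell\tau_0^\ell(f)$ is $(\tau_1,\dots,\tau_r)$-summable in $\mathbb K(t,\mathbf x)$; a telescoper of type $(\sigma_t;\sigma_{x_1},\dots,\sigma_{x_r})$ is the special case $\tau_0=\sigma_t$, $\tau_i=\sigma_{x_i}$. *)

theory Defs
  imports "HOL-Library.Poly_Mapping" "HOL-Computational_Algebra.Fraction_Field"
begin

text \<open>Multivariate polynomials over 'k in the variables indexed by nat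
  (variable 0 = t, variable i = x_i for i \<ge> 1), as finitely supported maps
  from monomials (exponent vectors) to coefficients.\<close>
type_synonym 'k kpoly = "(nat \<Rightarrow>\<^sub>0 nat) \<Rightarrow>\<^sub>0 'k"

type_synonym 'k krat = "'k kpoly fract"

definition Var :: "nat \<Rightarrow> 'k::field kpoly" where
  "Var j = Poly_Mapping.single (Poly_Mapping.single j 1) 1"

definition constp :: "'k::field \<Rightarrow> 'k kpoly" where
  "constp c = Poly_Mapping.single 0 c"

definition vars :: "'k::field kpoly \<Rightarrow> nat set" where
  "vars p = \<Union> (Poly_Mapping.keys ` Poly_Mapping.keys p)"

text \<open>The field K(t, x_1, ..., x_m) as a subset of the rational functions:
  quotients of polynomials involving only the variables 0..m.\<close>
definition RF :: "nat \<Rightarrow> 'k::field krat set" where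
  "RF m = {q. \<exists>a b. b \<noteq> 0 \<and> q = Fract a b \<and> vars a \<subseteq> {0..m} \<and> vars b \<subseteq> {0..m}}"

abbreviation Kt :: "'k::field krat set" where
  "Kt \<equiv> RF 0"

definition constf :: "'k::field \<Rightarrow> 'k krat" where
  "constf c = Fract (constp c) 1"

definition shiftp :: "(nat \<Rightarrow> int) \<Rightarrow> 'k::field kpoly \<Rightarrow> 'k kpoly" where
  "shiftp v p = (\<Sum>mn \<in> Poly_Mapping.keys p. constp (Poly_Mapping.lookup p mn) *
      (\<Prod>j \<in> Poly_Mapping.keys mn. (Var j + constp (of_int (v j))) ^ Poly_Mapping.lookup mn j))"

text \<open>The automorphism of the rational function field associated with the
  element sigma_t^(v 0) sigma_x1^(v 1) ... of G_t, given by its exponent vector v.\<close>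
definition shiftf :: "(nat \<Rightarrow> int) \<Rightarrow> 'k::field krat \<Rightarrow> 'k krat" where
  "shiftf v q = (case SOME ab. snd ab \<noteq> 0 \<and> q = Fract (fst ab) (snd ab) of
      (a, b) \<Rightarrow> Fract (shiftp v a) (shiftp v b))"

text \<open>Unit exponent vector: sigma_t is unitv 0, sigma_{x_i} is unitv i.\<close>
definition unitv :: "nat \<Rightarrow> nat \<Rightarrow> int" where
  "unitv i = (\<lambda>j. if j = i then 1 else 0)"

definition K_automorphism :: "nat \<Rightarrow> ('k::field krat \<Rightarrow> 'k krat) \<Rightarrow> bool" where
  "K_automorphism m \<phi> \<longleftrightarrow> bij_betw \<phi> (RF m) (RF m) \<and>
     (\<forall>a\<in>RF m. \<forall>b\<in>RF m. \<phi> (a + b) = \<phi> a + \<phi> b \<and> \<phi> (a * b) = \<phi> a * \<phi> b) \<and>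
     (\<forall>c. \<phi> (constf c) = constf c)"

definition summable_in :: "nat \<Rightarrow> nat \<Rightarrow> (nat \<Rightarrow> nat \<Rightarrow> int) \<Rightarrow> 'k::field krat \<Rightarrow> bool" where
  "summable_in m r tau g \<longleftrightarrow>
     (\<exists>h :: nat \<Rightarrow> 'k krat. (\<forall>i\<in>{1..r}. h i \<in> RF m) \<and>
        g = (\<Sum>i=1..r. shiftf (tau i) (h i) - h i))"

definition has_telescoper :: "nat \<Rightarrow> nat \<Rightarrow> (nat \<Rightarrow> nat \<Rightarrow> int) \<Rightarrow> 'k::field krat \<Rightarrow> bool" where
  "has_telescoper m r tau f \<longleftrightarrow>
     (\<exists>(\<rho>::nat) (e :: nat \<Rightarrow> 'k krat).
        (\<forall>l\<le>\<rho>. e l \<in> Kt) \<and> (\<exists>l\<le>\<rho>. e l \<noteq> 0) \<and>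
        summable_in m r tau (\<Sum>l\<le>\<rho>. e l * (shiftf (tau 0) ^^ l) f))"

end

theory Submission
  imports Defs "HOL-Library.Function_Algebras" HOL.Rat HOL.Vector_Spaces
begin

lemma constp_add: "constp (a + b) = constp a + (constp b :: 'k::field kpoly)"
  by (simp add: constp_def single_add)
lemma constp_mult: "constp (a * b) = constp a * (constp b :: 'k::field kpoly)"
  by (simp add: constp_def mult_single)
lemma constp_0[simp]: "constp 0 = (0 :: 'k::field kpoly)"
  by (simp add: constp_def)
lemma constp_1[simp]: "constp 1 = (1 :: 'k::field kpoly)"
  by (simp add: constp_def)
lemma constp_uminus: "constp (- a) = - (constp a :: 'k::field kpoly)"
  by (simp add: constp_def single_uminus)
lemma constp_diff: "constp (a - b) = constp a - (constp b :: 'k::field kpoly)"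
  by (simp add: constp_def single_diff)
lemma constp_sum: "constp (sum f A) = (\<Sum>x\<in>A. constp (f x) :: 'k::field kpoly)"
  by (induction A rule: infinite_finite_induct) (auto simp: constp_add)

definition mon :: "(nat \<Rightarrow> 'k::field kpoly) \<Rightarrow> (nat \<Rightarrow>\<^sub>0 nat) \<Rightarrow> 'k kpoly" where
  "mon s mn = (\<Prod>j \<in> Poly_Mapping.keys mn. s j ^ Poly_Mapping.lookup mn j)"

definition ev :: "(nat \<Rightarrow> 'k::field kpoly) \<Rightarrow> 'k kpoly \<Rightarrow> 'k kpoly" where
  "ev s p = (\<Sum>mn \<in> Poly_Mapping.keys p. constp (Poly_Mapping.lookup p mn) * mon s mn)"

lemma shiftp_ev: "shiftp v = ev (\<lambda>j. Var j + constp (of_int (v j)))"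
  by (simp add: fun_eq_iff shiftp_def ev_def mon_def)

lemma mon_superset:
  assumes "finite S" "Poly_Mapping.keys mn \<subseteq> S"
  shows "mon s mn = (\<Prod>j\<in>S. s j ^ Poly_Mapping.lookup mn j)"
  unfolding mon_def
  by (rule prod.mono_neutral_left) (use assms in \<open>auto simp: in_keys_iff\<close>)

lemma mon_add: "mon s (a + b) = mon s a * mon s b"
proof -
  let ?S = "Poly_Mapping.keys a \<union> Poly_Mapping.keys b"
  have f: "finite ?S" by simp
  have "mon s (a + b) = (\<Prod>j\<in>?S. s j ^ Poly_Mapping.lookup (a+b) j)"
    by (rule mon_superset[OF f keys_add])
  also have "\<dots> = (\<Prod>j\<in>?S. s j ^ Poly_Mapping.lookup a j) * (\<Prod>j\<in>?S. s j ^ Poly_Mapping.lookup b j)"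
    unfolding lookup_add power_add prod.distrib ..
  also have "\<dots> = mon s a * mon s b"
    using mon_superset[OF f, of a s] mon_superset[OF f, of b s] by auto
  finally show ?thesis .
qed

lemma mon_0[simp]: "mon s 0 = 1"
  by (simp add: mon_def)

lemma ev_superset:
  assumes "finite S" "Poly_Mapping.keys p \<subseteq> S"
  shows "ev s p = (\<Sum>mn\<in>S. constp (Poly_Mapping.lookup p mn) * mon s mn)"
  unfolding ev_def
  by (rule sum.mono_neutral_left) (use assms in \<open>auto simp: in_keys_iff\<close>)

lemma ev_add: "ev s (p + q) = ev s p + ev s q"
proof -
  let ?S = "Poly_Mapping.keys p \<union> Poly_Mapping.keys q"
  have f: "finite ?S" by simp
  have "ev s (p + q) = (\<Sum>mn\<in>?S. constp (Poly_Mapping.lookup (p+q) mn) * mon s mn)"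
    by (rule ev_superset[OF f keys_add])
  also have "\<dots> = ev s p + ev s q"
    by (simp add: ev_superset[OF f] lookup_add constp_add distrib_right sum.distrib)
  finally show ?thesis .
qed

lemma ev_0[simp]: "ev s 0 = 0"
  by (simp add: ev_def)

lemma ev_sum: "ev s (sum f A) = (\<Sum>x\<in>A. ev s (f x))"
  by (induction A rule: infinite_finite_induct) (auto simp: ev_add)

lemma ev_uminus: "ev s (- p) = - ev s p"
  using ev_add[of s "-p" p] by (simp add: eq_neg_iff_add_eq_0)

lemma ev_diff: "ev s (p - q) = ev s p - ev s q"
  using ev_add[of s p "-q"] by (simp add: ev_uminus)

lemma ev_single: "ev s (Poly_Mapping.single a c) = constp c * mon s a"
  by (simp add: ev_def)

lemma poly_repr: "p = (\<Sum>k\<in>Poly_Mapping.keys p. Poly_Mapping.single k (Poly_Mapping.lookup p k))"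
  by (rule poly_mapping_eqI)
     (auto simp: lookup_sum lookup_single when_def in_keys_iff sum.delta' split: if_splits)

lemma ev_mult: "ev s (p * q) = ev s p * ev s q"
proof -
  have "p * q = (\<Sum>a\<in>Poly_Mapping.keys p. Poly_Mapping.single a (Poly_Mapping.lookup p a)) *
                (\<Sum>b\<in>Poly_Mapping.keys q. Poly_Mapping.single b (Poly_Mapping.lookup q b))"
    using poly_repr[of p] poly_repr[of q] by simp
  also have "\<dots> = (\<Sum>a\<in>Poly_Mapping.keys p. \<Sum>b\<in>Poly_Mapping.keys q.
        Poly_Mapping.single (a + b) (Poly_Mapping.lookup p a * Poly_Mapping.lookup q b))"
    by (simp add: sum_product mult_single)
  finally have "ev s (p * q) = (\<Sum>a\<in>Poly_Mapping.keys p. \<Sum>b\<in>Poly_Mapping.keys q.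
        constp (Poly_Mapping.lookup p a) * mon s a * (constp (Poly_Mapping.lookup q b) * mon s b))"
    by (simp add: ev_sum ev_single constp_mult mon_add mult_ac)
  also have "\<dots> = ev s p * ev s q"
    by (simp add: ev_def sum_product)
  finally show ?thesis .
qed


lemma ev_constp[simp]: "ev s (constp c) = constp c"
  by (simp add: constp_def ev_single)

lemma ev_1[simp]: "ev s 1 = 1"
  using ev_constp[of s 1] by simp

lemma ev_Var[simp]: "ev s (Var j) = s j"
  by (simp add: Var_def ev_single mon_def)

lemma ev_pow: "ev s (p ^ k) = ev s p ^ k"
  by (induction k) (auto simp: ev_mult)

lemma ev_prod: "ev s (prod f A) = (\<Prod>x\<in>A. ev s (f x))"
  by (induction A rule: infinite_finite_induct) (auto simp: ev_mult)

lemma ev_mon: "ev s (mon u a) = mon (\<lambda>j. ev s (u j)) a"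
  by (simp add: mon_def ev_prod ev_pow)

lemma ev_comp: "ev s (ev u p) = ev (\<lambda>j. ev s (u j)) p"
  by (simp add: ev_def[of u] ev_sum ev_mult ev_mon) (simp add: ev_def)

lemma Var_pow: "Var j ^ k = (Poly_Mapping.single (Poly_Mapping.single j k) 1 :: 'k::field kpoly)"
proof (induction k)
  case 0 then show ?case by simp
next
  case (Suc k)
  have "Var j ^ Suc k = Poly_Mapping.single (Poly_Mapping.single j k) 1 * (Var j :: 'k kpoly)"
    by (simp add: Suc mult.commute)
  also have "\<dots> = Poly_Mapping.single (Poly_Mapping.single j k + Poly_Mapping.single j 1) 1"
    by (simp add: Var_def mult_single)
  also have "Poly_Mapping.single j k + Poly_Mapping.single j 1 = Poly_Mapping.single j (Suc k)"
    by (simp add: single_add[symmetric])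
  finally show ?case .
qed

lemma mon_Var: "mon Var a = (Poly_Mapping.single a 1 :: 'k::field kpoly)"
proof -
  have "\<And>S. finite S \<Longrightarrow> (\<Prod>j\<in>S. (Var j :: 'k kpoly) ^ Poly_Mapping.lookup a j) =
      Poly_Mapping.single (\<Sum>j\<in>S. Poly_Mapping.single j (Poly_Mapping.lookup a j)) 1"
  proof -
    fix S :: "nat set" assume "finite S"
    then show "?thesis S"
      by (induction S rule: finite_induct) (auto simp: Var_pow mult_single)
  qed
  then show ?thesis unfolding mon_def using poly_repr[of a, symmetric] by simp
qed

lemma ev_Var_id[simp]: "ev Var p = p"
proof -
  have "ev Var p = (\<Sum>k\<in>Poly_Mapping.keys p. Poly_Mapping.single k (Poly_Mapping.lookup p k))"
    unfolding ev_def mon_Var by (simp add: constp_def mult_single)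
  then show ?thesis using poly_repr[of p] by simp
qed

lemma ev_cong:
  assumes "\<And>j. j \<in> vars p \<Longrightarrow> s j = s' j"
  shows "ev s p = ev s' p"
proof -
  have "s j ^ Poly_Mapping.lookup mn j = s' j ^ Poly_Mapping.lookup mn j"
    if "mn \<in> Poly_Mapping.keys p" "j \<in> Poly_Mapping.keys mn" for mn j
  proof -
    have "j \<in> vars p" using that unfolding vars_def by blast
    then show ?thesis using assms by simp
  qed
  then show ?thesis unfolding ev_def mon_def
    by (intro sum.cong refl arg_cong[where f="(*) _"] prod.cong) auto
qed

lemma vars_add: "vars (p + q) \<subseteq> vars p \<union> vars q"
  unfolding vars_def using keys_add[of p q] by blast

lemma vars_mult: "vars (p * q) \<subseteq> vars p \<union> vars q"
proof
  fix j assume "j \<in> vars (p * q)"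
  then obtain mn where mn: "mn \<in> Poly_Mapping.keys (p * q)" "j \<in> Poly_Mapping.keys mn"
    unfolding vars_def by blast
  then obtain a b where ab: "mn = a + b" "a \<in> Poly_Mapping.keys p" "b \<in> Poly_Mapping.keys q"
    using keys_mult[of p q] by blast
  then have "j \<in> Poly_Mapping.keys a \<union> Poly_Mapping.keys b" using mn(2) keys_add[of a b] by blast
  then show "j \<in> vars p \<union> vars q" using ab unfolding vars_def by blast
qed

lemma vars_constp[simp]: "vars (constp c :: 'k::field kpoly) = {}"
  by (simp add: vars_def constp_def)

lemma vars_Var: "vars (Var j :: 'k::field kpoly) \<subseteq> {j}"
  by (simp add: vars_def Var_def)

lemma vars_uminus[simp]: "vars (- p) = vars p"
  by (simp add: vars_def)

lemma vars_0[simp]: "vars 0 = {}" by (simp add: vars_def)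
lemma vars_1[simp]: "vars (1 :: 'k::field kpoly) = {}" by (simp add: vars_def)

lemma vars_addI: "vars p \<subseteq> V \<Longrightarrow> vars q \<subseteq> V \<Longrightarrow> vars (p + q) \<subseteq> V"
  using vars_add by blast
lemma vars_multI: "vars p \<subseteq> V \<Longrightarrow> vars q \<subseteq> V \<Longrightarrow> vars (p * q) \<subseteq> V"
  using vars_mult by blast
lemma vars_diffI: "vars p \<subseteq> V \<Longrightarrow> vars q \<subseteq> V \<Longrightarrow> vars (p - q) \<subseteq> V"
  using vars_addI[of p V "-q"] by simp

lemma vars_sumI: "(\<And>i. i \<in> A \<Longrightarrow> vars (f i) \<subseteq> V) \<Longrightarrow> vars (sum f A) \<subseteq> V"
  by (induction A rule: infinite_finite_induct) (simp_all add: vars_addI)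

lemma vars_prodI: "(\<And>i. i \<in> A \<Longrightarrow> vars (f i :: 'k::field kpoly) \<subseteq> V) \<Longrightarrow> vars (prod f A) \<subseteq> V"
  by (induction A rule: infinite_finite_induct) (simp_all add: vars_multI)

lemma vars_powI: "vars (p :: 'k::field kpoly) \<subseteq> V \<Longrightarrow> vars (p ^ k) \<subseteq> V"
  by (induction k) (simp_all add: vars_multI)

lemma vars_ev:
  assumes "vars p \<subseteq> {0..m}" "\<And>j. j \<le> m \<Longrightarrow> vars (s j) \<subseteq> V"
  shows "vars (ev s p) \<subseteq> V"
  unfolding ev_def mon_def
proof (intro vars_sumI vars_multI vars_prodI vars_powI)
  fix mn j assume "mn \<in> Poly_Mapping.keys p" "j \<in> Poly_Mapping.keys mn"
  then have "j \<in> vars p" unfolding vars_def by blast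
  then have "j \<le> m" using assms(1) by auto
  then show "vars (s j) \<subseteq> V" using assms(2) by blast
qed simp

definition liftf :: "('k::field kpoly \<Rightarrow> 'k kpoly) \<Rightarrow> 'k krat \<Rightarrow> 'k krat" where
  "liftf h q = (case SOME ab. snd ab \<noteq> 0 \<and> q = Fraction_Field.Fract (fst ab) (snd ab) of
      (a, b) \<Rightarrow> Fraction_Field.Fract (h a) (h b))"

lemma shiftf_liftf: "shiftf v = liftf (shiftp v)"
  by (simp add: fun_eq_iff shiftf_def liftf_def)

definition goodhom :: "('k::field kpoly \<Rightarrow> 'k kpoly) \<Rightarrow> bool" where
  "goodhom h \<longleftrightarrow> (\<forall>p q. h (p + q) = h p + h q) \<and> (\<forall>p q. h (p * q) = h p * h q) \<and> h 1 = 1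
     \<and> (\<forall>p. h p = 0 \<longrightarrow> p = 0)"

lemma goodhom_ev:
  assumes "\<And>j. ev s' (s j) = Var j"
  shows "goodhom (ev s)"
proof -
  have inv: "ev s' (ev s p) = p" for p
    by (simp add: ev_comp assms)
  show ?thesis unfolding goodhom_def
    using inv ev_0 ev_add ev_mult ev_1 by metis
qed

lemma ev_inv:
  assumes "\<And>j. ev s' (s j) = Var j"
  shows "ev s' (ev s p) = p"
  by (simp add: ev_comp assms)

context
  fixes h :: "'k::field kpoly \<Rightarrow> 'k kpoly"
  assumes gh: "goodhom h"
begin

lemma gh_add: "h (p + q) = h p + h q" using gh by (simp add: goodhom_def)
lemma gh_mult: "h (p * q) = h p * h q" using gh by (simp add: goodhom_def)
lemma gh_1: "h 1 = 1" using gh by (simp add: goodhom_def)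
lemma gh_0: "h 0 = 0"
proof -
  have "h 0 + h 0 = h 0 + 0" using gh_add[of 0 0] by (simp only: add_0_right)
  then show ?thesis by (simp only: add_left_cancel)
qed
lemma gh_nz: "p \<noteq> 0 \<Longrightarrow> h p \<noteq> 0" using gh by (auto simp: goodhom_def)
lemma gh_uminus: "h (- p) = - h p"
  using gh_add[of "-p" p] gh_0 by (simp add: eq_neg_iff_add_eq_0)

lemma liftf_Fract:
  assumes "b \<noteq> 0"
  shows "liftf h (Fraction_Field.Fract a b) = Fraction_Field.Fract (h a) (h b)"
proof -
  define ab where "ab = (SOME ab. snd ab \<noteq> 0 \<and> Fraction_Field.Fract a b = Fraction_Field.Fract (fst ab) (snd ab))"
  have "snd ab \<noteq> 0 \<and> Fraction_Field.Fract a b = Fraction_Field.Fract (fst ab) (snd ab)"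
    unfolding ab_def by (rule someI[of _ "(a, b)"]) (use assms in simp)
  then have nz: "snd ab \<noteq> 0" and eq: "a * snd ab = fst ab * b"
    using eq_fract(1)[OF assms] by auto
  from eq have "h a * h (snd ab) = h (fst ab) * h b" by (simp add: gh_mult[symmetric])
  then have "Fraction_Field.Fract (h (fst ab)) (h (snd ab)) = Fraction_Field.Fract (h a) (h b)"
    using eq_fract(1)[of "h (snd ab)" "h b"] gh_nz nz assms by auto
  then show ?thesis
    unfolding liftf_def ab_def[symmetric] by (simp add: case_prod_beta)
qed

lemma liftf_add: "liftf h (x + y) = liftf h x + liftf h y"
proof (cases x; cases y)
  fix a b c d assume x: "x = Fraction_Field.Fract a b" "b \<noteq> 0" and y: "y = Fraction_Field.Fract c d" "d \<noteq> 0"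
  then show ?thesis
    by (simp add: liftf_Fract gh_nz gh_add gh_mult)
qed

lemma liftf_mult: "liftf h (x * y) = liftf h x * liftf h y"
proof (cases x; cases y)
  fix a b c d assume x: "x = Fraction_Field.Fract a b" "b \<noteq> 0" and y: "y = Fraction_Field.Fract c d" "d \<noteq> 0"
  then show ?thesis
    by (simp add: liftf_Fract gh_nz gh_add gh_mult)
qed

lemma liftf_0[simp]: "liftf h 0 = 0"
  by (simp add: Zero_fract_def liftf_Fract gh_0 gh_1)

lemma liftf_1[simp]: "liftf h 1 = 1"
  by (simp add: One_fract_def liftf_Fract gh_1)

lemma liftf_uminus: "liftf h (- x) = - liftf h x"
  using liftf_add[of "-x" x] by (simp add: eq_neg_iff_add_eq_0)

lemma liftf_diff: "liftf h (x - y) = liftf h x - liftf h y"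
  using liftf_add[of x "-y"] by (simp add: liftf_uminus)

lemma liftf_sum: "liftf h (sum f A) = (\<Sum>i\<in>A. liftf h (f i))"
  by (induction A rule: infinite_finite_induct) (simp_all add: liftf_add)

lemma liftf_inj0: "liftf h x = 0 \<Longrightarrow> x = 0"
proof (cases x)
  fix a b assume x: "x = Fraction_Field.Fract a b" "b \<noteq> 0" and z: "liftf h x = 0"
  then have "Fraction_Field.Fract (h a) (h b) = 0" by (simp add: liftf_Fract)
  then have "h a = 0" using gh_nz[OF x(2)] by (simp add: Zero_fract_def eq_fract)
  then have "a = 0" using gh_nz by blast
  then show "x = 0" using x by (simp add: Zero_fract_def eq_fract)
qed

lemma liftf_constf:
  assumes "h (constp c) = constp c"
  shows "liftf h (constf c) = constf c"
  by (simp add: constf_def liftf_Fract gh_1 assms)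

lemma liftf_RF:
  assumes "\<And>p. vars p \<subseteq> {0..m} \<Longrightarrow> vars (h p) \<subseteq> {0..m}" "x \<in> RF m"
  shows "liftf h x \<in> RF m"
proof -
  from assms(2) obtain a b where ab: "b \<noteq> 0" "x = Fraction_Field.Fract a b" "vars a \<subseteq> {0..m}" "vars b \<subseteq> {0..m}"
    unfolding RF_def by blast
  then show ?thesis unfolding RF_def
    by (intro CollectI exI[of _ "h a"] exI[of _ "h b"]) (simp add: liftf_Fract gh_nz assms(1))
qed

end

lemma goodhom_comp: "goodhom g \<Longrightarrow> goodhom h \<Longrightarrow> goodhom (g \<circ> h)"
  unfolding goodhom_def comp_def by metis

lemma liftf_comp:
  assumes "goodhom g" "goodhom h"
  shows "liftf g (liftf h x) = liftf (g \<circ> h) x"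
proof (cases x)
  fix a b assume x: "x = Fraction_Field.Fract a b" "b \<noteq> 0"
  then show ?thesis
    using assms goodhom_comp[OF assms]
    by (simp add: liftf_Fract gh_nz)
qed

lemma liftf_id:
  assumes "\<And>p. h p = p"
  shows "liftf h x = x"
proof -
  have "goodhom h" using assms by (simp add: goodhom_def)
  then show ?thesis
    by (cases x) (simp add: liftf_Fract assms)
qed

definition sc :: "rat \<Rightarrow> (nat \<Rightarrow> rat) \<Rightarrow> (nat \<Rightarrow> rat)" where
  "sc c v = (\<lambda>j. c * v j)"

lemma sc_apply[simp]: "sc c v j = c * v j" by (simp add: sc_def)

lemma fsum_apply: "(sum f A :: nat \<Rightarrow> rat) j = (\<Sum>k\<in>A. f k j)"
  by (induction A rule: infinite_finite_induct) (simp_all add: zero_fun_def plus_fun_def)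

interpretation V: vector_space sc
  by unfold_locales (simp_all add: fun_eq_iff sc_def algebra_simps plus_fun_def)

definition ev_vec :: "nat \<Rightarrow> nat \<Rightarrow> rat" where
  "ev_vec k = (\<lambda>j. if j = k then 1 else 0)"

lemma span_in_sub:
  assumes "\<And>v. v \<in> S \<Longrightarrow> P v"
    and "P 0" and "\<And>x y. P x \<Longrightarrow> P y \<Longrightarrow> P (x + y)" and "\<And>c x. P x \<Longrightarrow> P (sc c x)"
  shows "\<And>y. y \<in> V.span S \<Longrightarrow> P y"
proof -
  have "V.span S \<subseteq> {y. P y}"
    by (rule V.span_minimal) (use assms in \<open>auto simp: V.subspace_def\<close>)
  then show "\<And>y. y \<in> V.span S \<Longrightarrow> P y" by blast
qed

lemma ev_vec_inj: "inj ev_vec"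
proof (rule injI)
  fix x y assume "ev_vec x = ev_vec y"
  then have "ev_vec x x = ev_vec y x" by simp
  then show "x = y" by (simp add: ev_vec_def split: if_splits)
qed

lemma sum_ev_vec_apply: "finite S \<Longrightarrow> (\<Sum>k\<in>S. sc (u k) (ev_vec k)) j = (if j \<in> S then u j else 0)"
proof -
  assume S: "finite S"
  have "(\<Sum>k\<in>S. sc (u k) (ev_vec k)) j = (\<Sum>k\<in>S. if j = k then u k else 0)"
    unfolding fsum_apply sc_apply ev_vec_def by (rule sum.cong) auto
  also have "\<dots> = (if j \<in> S then u j else 0)" using S by (simp add: sum.delta)
  finally show ?thesis .
qed

lemma reindex_ev: "(\<Sum>v\<in>ev_vec ` S. f v) = (\<Sum>k\<in>S. f (ev_vec k))"
  using sum.reindex[OF inj_on_subset[OF ev_vec_inj subset_UNIV], of f] by simp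

lemma indep_ev: "V.independent (ev_vec ` S)" if "finite S"
proof -
  have "\<not> V.dependent (ev_vec ` S)"
  proof
    assume "V.dependent (ev_vec ` S)"
    then have "\<exists>u. (\<exists>v\<in>ev_vec ` S. u v \<noteq> 0) \<and> (\<Sum>v\<in>ev_vec ` S. sc (u v) v) = 0"
      using V.dependent_finite[OF finite_imageI[OF that]] by blast
    then obtain u where u: "\<exists>v\<in>ev_vec ` S. u v \<noteq> 0" "(\<Sum>v\<in>ev_vec ` S. sc (u v) v) = 0"
      by blast
    then obtain k where k: "k \<in> S" "u (ev_vec k) \<noteq> 0" by auto
    have "(\<Sum>v\<in>ev_vec ` S. sc (u v) v) k = (\<Sum>k'\<in>S. sc (u (ev_vec k')) (ev_vec k')) k"
      by (simp add: reindex_ev)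
    also have "\<dots> = u (ev_vec k)" using k that by (simp add: sum_ev_vec_apply)
    finally show False using u(2) k by (simp add: zero_fun_def)
  qed
  then show ?thesis by simp
qed

lemma Vp_char:
  "y \<in> V.span (ev_vec ` {1..m}) \<longleftrightarrow> y 0 = 0 \<and> (\<forall>j>m. y j = 0)"
proof
  assume yin: "y \<in> V.span (ev_vec ` {1..m})"
  show "y 0 = 0 \<and> (\<forall>j>m. y j = 0)"
    by (rule span_in_sub[where P="\<lambda>y. y 0 = 0 \<and> (\<forall>j>m. y j = 0)", OF _ _ _ _ yin])
       (auto simp: ev_vec_def zero_fun_def plus_fun_def)
next
  assume y: "y 0 = 0 \<and> (\<forall>j>m. y j = 0)"
  have "y = (\<Sum>k\<in>{1..m}. sc (y k) (ev_vec k))"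
  proof
    fix j show "y j = (\<Sum>k\<in>{1..m}. sc (y k) (ev_vec k)) j"
      using y by (cases "j = 0") (auto simp: sum_ev_vec_apply not_le)
  qed
  also have "\<dots> \<in> V.span (ev_vec ` {1..m})"
    by (intro V.span_sum V.span_scale V.span_base) auto
  finally show "y \<in> V.span (ev_vec ` {1..m})" .
qed

lemma sum_two_delta:
  fixes f :: "nat \<Rightarrow> rat"
  assumes "finite S" "i \<in> S" "i' \<in> S" "i \<noteq> i'"
  shows "(\<Sum>k\<in>S. (if k = i then 1 else if k = i' then -1 else 0) * f k) = f i - f i'"
proof -
  have "(\<Sum>k\<in>S. (if k = i then 1 else if k = i' then -1 else 0) * f k)
      = (\<Sum>k\<in>S. (if k = i then f k else 0) - (if k = i' then f k else 0))"
    by (rule sum.cong) (use assms in auto)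
  also have "\<dots> = f i - f i'" using assms by (simp add: sum_subtractf sum.delta')
  finally show ?thesis .
qed

lemma linalg_basis:
  fixes w :: "nat \<Rightarrow> nat \<Rightarrow> rat" and m r :: nat
  assumes rm: "r \<le> m"
    and supp: "\<forall>i\<le>r. \<forall>j>m. w i j = 0"
    and z0: "\<forall>i\<in>{1..r}. w i 0 = 0"
    and ind: "\<forall>c. (\<forall>j. (\<Sum>i\<in>{1..r}. c i * w i j) = 0) \<longrightarrow> (\<forall>i\<in>{1..r}. c i = 0)"
  shows "\<exists>b. (\<forall>i\<le>r. b i = w i) \<and> (\<forall>k\<in>{1..m}. b k \<in> V.span (ev_vec ` {1..m}))
     \<and> inj_on b {1..m} \<and> V.independent (b ` {1..m})
     \<and> V.span (ev_vec ` {1..m}) \<subseteq> V.span (b ` {1..m})"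
proof -
  define Vp where "Vp = V.span (ev_vec ` {1..m})"
  define Ws where "Ws = w ` {1..r}"
  have injw: "inj_on w {1..r}"
  proof (rule inj_onI, rule ccontr)
    fix i i' assume i: "i \<in> {1..r}" "i' \<in> {1..r}" "w i = w i'" "i \<noteq> i'"
    define c where "c = (\<lambda>k. if k = i then 1 else if k = i' then -1 else (0::rat))"
    have "\<forall>j. (\<Sum>k\<in>{1..r}. c k * w k j) = 0"
    proof
      fix j
      have "(\<Sum>k\<in>{1..r}. c k * w k j) = w i j - w i' j"
        unfolding c_def by (rule sum_two_delta) (use i in auto)
      then show "(\<Sum>k\<in>{1..r}. c k * w k j) = 0" by (simp add: i(3))
    qed
    moreover have "(\<forall>j. (\<Sum>k\<in>{1..r}. c k * w k j) = 0) \<longrightarrow> (\<forall>i\<in>{1..r}. c i = 0)"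
      using ind by (rule spec)
    ultimately have "\<forall>i\<in>{1..r}. c i = 0" by (rule rev_mp)
    then have "c i = 0" using i(1) by (rule bspec)
    then show False by (simp add: c_def)
  qed
  have WsVp: "Ws \<subseteq> Vp"
  proof
    fix v assume "v \<in> Ws"
    then obtain i where i: "i \<in> {1..r}" "v = w i" unfolding Ws_def by blast
    have "v 0 = 0 \<and> (\<forall>j>m. v j = 0)" using i supp z0 by auto
    then show "v \<in> Vp" unfolding Vp_def by (rule Vp_char[THEN iffD2])
  qed
  have indW: "V.independent Ws"
  proof
    assume "V.dependent Ws"
    moreover have finW: "finite Ws" unfolding Ws_def by simp
    ultimately have "\<exists>u. (\<exists>v\<in>Ws. u v \<noteq> 0) \<and> (\<Sum>v\<in>Ws. sc (u v) v) = 0"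
      by (rule V.dependent_finite[THEN iffD1, rotated])
    then obtain u where u: "\<exists>v\<in>Ws. u v \<noteq> 0" "(\<Sum>v\<in>Ws. sc (u v) v) = 0" by blast
    have "(\<Sum>v\<in>Ws. sc (u v) v) = (\<Sum>i\<in>{1..r}. sc (u (w i)) (w i))"
      unfolding Ws_def using sum.reindex[OF injw, of "\<lambda>v. sc (u v) v"] by simp
    then have z: "(\<Sum>i\<in>{1..r}. sc (u (w i)) (w i)) = 0" using u(2) by (simp only:)
    have "\<forall>j. (\<Sum>i\<in>{1..r}. u (w i) * w i j) = 0"
    proof
      fix j
      have "(\<Sum>i\<in>{1..r}. sc (u (w i)) (w i)) j = 0" using z by (simp add: zero_fun_def)
      then show "(\<Sum>i\<in>{1..r}. u (w i) * w i j) = 0" by (simp only: fsum_apply sc_apply)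
    qed
    moreover have "(\<forall>j. (\<Sum>i\<in>{1..r}. u (w i) * w i j) = 0) \<longrightarrow> (\<forall>i\<in>{1..r}. u (w i) = 0)"
      using ind by (rule spec)
    ultimately have "\<forall>i\<in>{1..r}. u (w i) = 0" by (rule rev_mp)
    then show False using u(1) unfolding Ws_def by blast
  qed
  obtain B' where B': "Ws \<subseteq> B'" "B' \<subseteq> Vp" "V.independent B'" "Vp \<subseteq> V.span B'"
    using V.maximal_independent_subset_extend[OF WsVp indW] by blast
  define E where "E = ev_vec ` {1..m}"
  have finE: "finite E" and cardE: "card E = m"
    unfolding E_def by (simp_all add: card_image inj_on_subset[OF ev_vec_inj subset_UNIV])
  have "finite B' \<and> card B' \<le> card E"
    by (rule V.independent_span_bound[OF finE B'(3)]) (use B'(2) in \<open>simp add: Vp_def E_def\<close>)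
  then have finB: "finite B'" and cB1: "card B' \<le> m" using cardE by auto
  have "E \<subseteq> V.span B'" using B'(4) V.span_superset[of E] unfolding Vp_def E_def by blast
  then have "card E \<le> card B'"
    using V.independent_span_bound[OF finB indep_ev[of "{1..m}"]] unfolding E_def by simp
  then have cardB: "card B' = m" using cB1 cardE by simp
  have cardW: "card Ws = r" unfolding Ws_def using card_image[OF injw] by simp
  have "card (B' - Ws) = m - r" using cardB cardW B'(1) finB by (simp add: card_Diff_subset finite_subset)
  moreover have "card {r+1..m} = m - r" by simp
  ultimately obtain g where g: "bij_betw g {r+1..m} (B' - Ws)"
    using bij_betw_iff_card[of "{r+1..m}" "B' - Ws"] finB by auto
  define b where "b = (\<lambda>k. if k \<le> r then w k else g k)"
  have b1: "bij_betw b {1..r} Ws"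
    unfolding Ws_def using bij_betw_imageI[OF injw refl]
    by (rule bij_betw_cong[THEN iffD1, rotated]) (simp add: b_def)
  have b2: "bij_betw b {r+1..m} (B' - Ws)"
    using g by (rule bij_betw_cong[THEN iffD1, rotated]) (simp add: b_def)
  have "bij_betw b ({1..r} \<union> {r+1..m}) (Ws \<union> (B' - Ws))"
    by (rule bij_betw_combine[OF b1 b2]) blast
  moreover have "{1..r} \<union> {r+1..m} = {1..m}" using rm by auto
  moreover have "Ws \<union> (B' - Ws) = B'" using B'(1) by blast
  ultimately have bb: "bij_betw b {1..m} B'" by simp
  show ?thesis
  proof (intro exI[of _ b] conjI)
    show "\<forall>i\<le>r. b i = w i" by (simp add: b_def)
    show "\<forall>k\<in>{1..m}. b k \<in> V.span (ev_vec ` {1..m})"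
      using bb B'(2) unfolding Vp_def bij_betw_def by blast
    show "inj_on b {1..m}" using bb by (simp add: bij_betw_def)
    show "V.independent (b ` {1..m})" using bb B'(3) by (simp add: bij_betw_def)
    show "V.span (ev_vec ` {1..m}) \<subseteq> V.span (b ` {1..m})"
      using bb B'(4) unfolding Vp_def bij_betw_def by simp
  qed
qed

lemma sum_split0: "(\<Sum>k\<le>(m::nat). f k) = f 0 + (\<Sum>k\<in>{1..m}. f k)"
proof -
  have "{..m} = insert 0 {1..m}" by auto
  then show ?thesis by simp
qed

lemma sc_diff: "sc (c - d) v = sc c v - sc d v"
  by (simp add: fun_eq_iff sc_def algebra_simps)

lemma sc_zero: "sc 0 v = 0"
  by (simp add: fun_eq_iff sc_def)

lemma linalg_matrix:
  fixes w :: "nat \<Rightarrow> nat \<Rightarrow> rat" and m r :: nat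
  assumes rm: "r \<le> m" and w00: "w 0 0 \<noteq> 0"
    and supp: "\<forall>i\<le>r. \<forall>j>m. w i j = 0"
    and z0: "\<forall>i\<in>{1..r}. w i 0 = 0"
    and ind: "\<forall>c. (\<forall>j. (\<Sum>i\<in>{1..r}. c i * w i j) = 0) \<longrightarrow> (\<forall>i\<in>{1..r}. c i = 0)"
  shows "\<exists>A B. (\<forall>i\<le>r. \<forall>j. A j i = w i j) \<and> (\<forall>k\<in>{1..m}. A 0 k = 0) \<and> (\<forall>k\<in>{1..m}. B 0 k = 0)
      \<and> (\<forall>j\<le>m. \<forall>l\<le>m. (\<Sum>k\<le>m. A j k * B k l) = (if j = l then 1 else 0))
      \<and> (\<forall>j\<le>m. \<forall>l\<le>m. (\<Sum>k\<le>m. B j k * A k l) = (if j = l then 1 else 0))"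
proof -
  obtain b where bw: "\<forall>i\<le>r. b i = w i" and bV: "\<forall>k\<in>{1..m}. b k \<in> V.span (ev_vec ` {1..m})"
    and binj: "inj_on b {1..m}" and bind: "V.independent (b ` {1..m})"
    and bspan: "V.span (ev_vec ` {1..m}) \<subseteq> V.span (b ` {1..m})"
    using linalg_basis[OF rm supp z0 ind] by blast
  define a where "a = w 0 0"
  have a: "a \<noteq> 0" using w00 by (simp add: a_def)
  have b0: "b 0 = w 0" using bw by simp
  have bk0: "b k 0 = 0" if "k \<in> {1..m}" for k
    using bV that Vp_char[of "b k" m] by blast
  have bsupp: "b k j = 0" if "k \<le> m" "j > m" for k j
  proof (cases "k = 0")
    case True then show ?thesis using b0 supp that by simp
  next
    case False then have "k \<in> {1..m}" using that by simp
    then show ?thesis using bV that Vp_char[of "b k" m] by blast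
  qed
  have b00: "b 0 0 = a" using b0 a_def by simp
  have repr: "\<exists>c. y = (\<Sum>k\<le>m. sc (c k) (b k))" if ysupp: "\<forall>j>m. y j = 0" for y
  proof -
    define y' where "y' = y - sc (y 0 / a) (b 0)"
    have "y' 0 = 0" using a b00 by (simp add: y'_def)
    moreover have "\<forall>j>m. y' j = 0" using ysupp bsupp by (simp add: y'_def)
    ultimately have "y' \<in> V.span (ev_vec ` {1..m})" using Vp_char[of y' m] by blast
    then have "y' \<in> V.span (b ` {1..m})" using bspan by blast
    then obtain u where u: "y' = (\<Sum>v\<in>b ` {1..m}. sc (u v) v)"
      using V.span_finite[of "b ` {1..m}"] by auto
    also have "\<dots> = (\<Sum>k\<in>{1..m}. sc (u (b k)) (b k))"
      using sum.reindex[OF binj, of "\<lambda>v. sc (u v) v"] by simp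
    finally have y'eq: "y' = (\<Sum>k\<in>{1..m}. sc (u (b k)) (b k))" .
    define c where "c = (\<lambda>k. if k = 0 then y 0 / a else u (b k))"
    have "(\<Sum>k\<le>m. sc (c k) (b k)) = sc (y 0 / a) (b 0) + (\<Sum>k\<in>{1..m}. sc (u (b k)) (b k))"
      unfolding sum_split0[of _ m] by (simp add: c_def)
    also have "\<dots> = sc (y 0 / a) (b 0) + y'" using y'eq by simp
    also have "\<dots> = y" by (simp add: y'_def)
    finally show ?thesis by metis
  qed
  have uniq0: "c k = 0" if z: "(\<Sum>k\<le>m. sc (c k) (b k)) = 0" and k: "k \<le> m" for c k
  proof -
    have "(\<Sum>k\<le>m. sc (c k) (b k)) 0 = 0" using z by (simp add: zero_fun_def)
    then have "c 0 * a + (\<Sum>k\<in>{1..m}. c k * b k 0) = 0"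
      by (simp add: fsum_apply sum_split0[of _ m] b00)
    then have c0: "c 0 = 0" using a bk0 by simp
    then have z1: "(\<Sum>k\<in>{1..m}. sc (c k) (b k)) = 0"
      using z by (simp add: sum_split0[of _ m] sc_zero)
    define u where "u = (\<lambda>v. c (inv_into {1..m} b v))"
    have "(\<Sum>v\<in>b ` {1..m}. sc (u v) v) = (\<Sum>k\<in>{1..m}. sc (u (b k)) (b k))"
      using sum.reindex[OF binj, of "\<lambda>v. sc (u v) v"] by simp
    also have "\<dots> = (\<Sum>k\<in>{1..m}. sc (c k) (b k))"
    proof (rule sum.cong[OF refl])
      fix k assume "k \<in> {1..m}"
      then show "sc (u (b k)) (b k) = sc (c k) (b k)"
        unfolding u_def using inv_into_f_f[OF binj \<open>k \<in> {1..m}\<close>] by simp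
    qed
    finally have z2: "(\<Sum>v\<in>b ` {1..m}. sc (u v) v) = 0" using z1 by simp
    show ?thesis
    proof (cases "k = 0")
      case True then show ?thesis using c0 by simp
    next
      case False
      then have kin: "k \<in> {1..m}" using k by simp
      have "u (b k) = 0"
        by (rule V.independentD[OF bind _ subset_refl z2]) (use kin in auto)
      then show ?thesis unfolding u_def using inv_into_f_f[OF binj kin] by simp
    qed
  qed
  have uniq: "c k = d k" if eq: "(\<Sum>k\<le>m. sc (c k) (b k)) = (\<Sum>k\<le>m. sc (d k) (b k))" and k: "k \<le> m"
    for c d k
  proof -
    have "(\<Sum>k\<le>m. sc (c k - d k) (b k)) = 0"
      using eq by (simp add: sc_diff sum_subtractf)
    then have "c k - d k = 0" using uniq0[of "\<lambda>k. c k - d k"] k by blast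
    then show ?thesis by simp
  qed
  define cf where "cf = (\<lambda>l. SOME c. ev_vec l = (\<Sum>k\<le>m. sc (c k) (b k)))"
  have cf: "ev_vec l = (\<Sum>k\<le>m. sc (cf l k) (b k))" if "l \<le> m" for l
  proof -
    have "\<exists>c. ev_vec l = (\<Sum>k\<le>m. sc (c k) (b k))"
      by (rule repr) (use that in \<open>simp add: ev_vec_def\<close>)
    then show ?thesis unfolding cf_def by (rule someI_ex)
  qed
  define A where "A = (\<lambda>j k. b k j)"
  define B where "B = (\<lambda>k l. cf l k)"
  have h1: "\<forall>i\<le>r. \<forall>j. A j i = w i j" using bw by (simp add: A_def)
  have h2: "\<forall>k\<in>{1..m}. A 0 k = 0" using bk0 by (simp add: A_def)
  have h3: "\<forall>l\<in>{1..m}. B 0 l = 0"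
  proof
    fix l assume l: "l \<in> {1..m}"
    have "ev_vec l 0 = (\<Sum>k\<le>m. sc (cf l k) (b k)) 0" using cf l by simp
    then have "0 = cf l 0 * a + (\<Sum>k\<in>{1..m}. cf l k * b k 0)"
      using l by (simp add: fsum_apply sum_split0[of _ m] b00 ev_vec_def)
    then have "cf l 0 * a = 0" using bk0 by simp
    then show "B 0 l = 0" using a by (simp add: B_def)
  qed
  have h4: "\<forall>j\<le>m. \<forall>l\<le>m. (\<Sum>k\<le>m. A j k * B k l) = (if j = l then 1 else 0)"
  proof (intro allI impI)
    fix j l assume j: "j \<le> m" and l: "l \<le> m"
    have "(\<Sum>k\<le>m. A j k * B k l) = (\<Sum>k\<le>m. sc (cf l k) (b k)) j"
      by (simp add: A_def B_def fsum_apply mult.commute)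
    also have "\<dots> = ev_vec l j" using cf l by simp
    finally show "(\<Sum>k\<le>m. A j k * B k l) = (if j = l then 1 else 0)"
      by (simp add: ev_vec_def)
  qed
  have h5: "\<forall>j\<le>m. \<forall>l\<le>m. (\<Sum>k\<le>m. B j k * A k l) = (if j = l then 1 else 0)"
  proof (intro allI impI)
    fix j l assume j: "j \<le> m" and l: "l \<le> m"
    define d where "d = (\<lambda>k. \<Sum>i\<le>m. cf i k * b l i)"
    have "(\<Sum>k\<le>m. sc (d k) (b k)) = (\<Sum>k\<le>m. sc (if k = l then 1 else 0) (b k))"
    proof
      fix i
      have "(\<Sum>k\<le>m. sc (d k) (b k)) i = (\<Sum>k\<le>m. \<Sum>i'\<le>m. b l i' * (cf i' k * b k i))"
        unfolding fsum_apply sc_apply d_def sum_distrib_right by (intro sum.cong refl) (simp add: mult_ac)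
      also have "\<dots> = (\<Sum>i'\<le>m. b l i' * (\<Sum>k\<le>m. sc (cf i' k) (b k)) i)"
        by (subst sum.swap) (simp add: fsum_apply sum_distrib_left)
      also have "\<dots> = (\<Sum>i'\<le>m. b l i' * ev_vec i' i)"
        by (rule sum.cong) (simp_all add: cf)
      also have "\<dots> = (\<Sum>i'\<le>m. if i' = i then b l i' else 0)"
        by (rule sum.cong) (auto simp: ev_vec_def)
      also have "\<dots> = (if i \<le> m then b l i else 0)" by (simp add: sum.delta)
      also have "\<dots> = b l i"
        using bsupp[OF l, of i] by (simp add: not_le)
      also have "\<dots> = (\<Sum>k\<le>m. if k = l then b k i else 0)"
        using l by (simp add: sum.delta)
      also have "\<dots> = (\<Sum>k\<le>m. sc (if k = l then 1 else 0) (b k)) i"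
        unfolding fsum_apply sc_apply by (rule sum.cong) auto
      finally show "(\<Sum>k\<le>m. sc (d k) (b k)) i = (\<Sum>k\<le>m. sc (if k = l then 1 else 0) (b k)) i" .
    qed
    then have "d j = (if j = l then 1 else 0)" using uniq[of d "\<lambda>k. if k = l then 1 else 0" j] j by simp
    then show "(\<Sum>k\<le>m. B j k * A k l) = (if j = l then 1 else 0)"
      by (simp add: d_def A_def B_def)
  qed
  show ?thesis by (intro exI[of _ A] exI[of _ B] conjI h1 h2 h3 h4 h5)
qed

definition sub :: "nat \<Rightarrow> (nat \<Rightarrow> nat \<Rightarrow> rat) \<Rightarrow> nat \<Rightarrow> 'k::field_char_0 kpoly" where
  "sub m X j = (if j \<le> m then (\<Sum>k\<le>m. constp (of_rat (X j k)) * Var k) else Var j)"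

lemma sub_inv:
  assumes "\<forall>j\<le>m. \<forall>l\<le>m. (\<Sum>k\<le>m. X j k * Y k l) = (if j = l then 1 else 0)"
  shows "ev (sub m Y) (sub m X j :: 'k::field_char_0 kpoly) = Var j"
proof (cases "j \<le> m")
  case False then show ?thesis by (simp add: sub_def)
next
  case True
  have "ev (sub m Y) (sub m X j :: 'k kpoly)
      = (\<Sum>k\<le>m. constp (of_rat (X j k)) * (\<Sum>l\<le>m. constp (of_rat (Y k l)) * Var l))"
    using True by (simp add: sub_def ev_sum ev_mult)
  also have "\<dots> = (\<Sum>l\<le>m. \<Sum>k\<le>m. constp (of_rat (X j k) * of_rat (Y k l)) * Var l)"
    by (subst sum.swap) (simp add: sum_distrib_left constp_mult mult_ac)
  also have "\<dots> = (\<Sum>l\<le>m. constp (of_rat (\<Sum>k\<le>m. X j k * Y k l)) * Var l)"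
    by (simp add: of_rat_sum of_rat_mult constp_sum sum_distrib_right)
  also have "\<dots> = (\<Sum>l\<le>m. if l = j then Var l else 0)"
    by (rule sum.cong) (use True assms in auto)
  also have "\<dots> = Var j" using True by (simp add: sum.delta)
  finally show ?thesis .
qed

lemma ev_shift_comm:
  assumes "vars p \<subseteq> {0..m}"
    and lin: "\<forall>j\<le>m. (\<Sum>k\<le>m. of_rat (X j k) * of_int (u k)) = (of_int (v j) :: 'k::field_char_0)"
  shows "ev (sub m X) (shiftp v p) = shiftp u (ev (sub m X) (p :: 'k kpoly))"
proof -
  have "ev (sub m X) (shiftp v p) = ev (\<lambda>j. ev (sub m X) (Var j + constp (of_int (v j)))) p"
    by (simp add: shiftp_ev ev_comp)
  also have "\<dots> = ev (\<lambda>j. shiftp u (sub m X j)) p"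
  proof (rule ev_cong)
    fix j assume "j \<in> vars p"
    then have j: "j \<le> m" using assms(1) by auto
    have "shiftp u (sub m X j :: 'k kpoly)
        = (\<Sum>k\<le>m. constp (of_rat (X j k)) * (Var k + constp (of_int (u k))))"
      using j by (simp add: sub_def shiftp_ev ev_sum ev_mult ev_add)
    also have "\<dots> = sub m X j + constp (\<Sum>k\<le>m. of_rat (X j k) * of_int (u k))"
      using j by (simp add: sub_def distrib_left sum.distrib constp_sum constp_mult)
    also have "\<dots> = sub m X j + constp (of_int (v j))" using lin j by simp
    finally have eq: "shiftp u (sub m X j :: 'k kpoly) = sub m X j + constp (of_int (v j))" .
    show "ev (sub m X) (Var j + constp (of_int (v j)) :: 'k kpoly) = shiftp u (sub m X j)"
    proof -
      have "ev (sub m X) (Var j + constp (of_int (v j)) :: 'k kpoly) = sub m X j + constp (of_int (v j))"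
        by (simp add: ev_add)
      then show ?thesis using eq by simp
    qed
  qed
  also have "\<dots> = shiftp u (ev (sub m X) p)"
    by (simp add: shiftp_ev ev_comp)
  finally show ?thesis .
qed

lemma vars_Var_le: "j \<in> V \<Longrightarrow> vars (Var j :: 'k::field kpoly) \<subseteq> V"
  using vars_Var[of j] by blast

lemma vars_constp_sub: "vars (constp c :: 'k::field kpoly) \<subseteq> V"
  by simp

lemma shift_inv: "ev (\<lambda>j. Var j + constp (of_int (- v j))) (Var j + constp (of_int (v j))) = (Var j :: 'k::field kpoly)"
  by (simp add: ev_add constp_add[symmetric])

lemma goodhom_shiftp: "goodhom (shiftp v :: 'k::field kpoly \<Rightarrow> _)"
  unfolding shiftp_ev by (rule goodhom_ev[OF shift_inv])

lemma vars_shiftp: "vars p \<subseteq> {0..m} \<Longrightarrow> vars (shiftp v p) \<subseteq> {0..m}"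
  unfolding shiftp_ev
proof (rule vars_ev)
  fix j assume "j \<le> m"
  then show "vars (Var j + constp (of_int (v j))) \<subseteq> {0..m}"
    by (intro vars_addI vars_Var_le vars_constp_sub) simp
qed

lemma vars_sub: "j \<le> m \<Longrightarrow> vars (sub m X j :: 'k::field_char_0 kpoly) \<subseteq> {0..m}"
  unfolding sub_def
  by (simp, intro vars_sumI vars_multI vars_Var_le vars_constp_sub) simp

lemma vars_ev_sub: "vars p \<subseteq> {0..m} \<Longrightarrow> vars (ev (sub m X) p :: 'k::field_char_0 kpoly) \<subseteq> {0..m}"
  by (rule vars_ev) (auto intro!: vars_sub)

lemma vars_ev_sub0:
  assumes "\<forall>k\<in>{1..m}. X 0 k = 0" "vars p \<subseteq> {0..0}"
  shows "vars (ev (sub m X) p :: 'k::field_char_0 kpoly) \<subseteq> {0..0}"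
proof (rule vars_ev[OF assms(2)])
  fix j :: nat assume "j \<le> 0"
  then have j: "j = 0" by simp
  have "vars (constp (of_rat (X 0 k)) * Var k :: 'k kpoly) \<subseteq> {0..0}" if "k \<le> m" for k
  proof (cases "k = 0")
    case True then show ?thesis using vars_mult[of "constp (of_rat (X 0 k))" "Var k"] vars_Var[of k] by auto
  next
    case False then show ?thesis using assms(1) that by simp
  qed
  then show "vars (sub m X j :: 'k kpoly) \<subseteq> {0..0}"
    using j unfolding sub_def by (auto intro!: vars_sumI)
qed

lemma rat_indep:
  fixes tau :: "nat \<Rightarrow> nat \<Rightarrow> int" and r :: nat
  assumes indep: "\<forall>c :: nat \<Rightarrow> int. (\<forall>j. (\<Sum>i\<le>r. c i * tau i j) = 0) \<longrightarrow> (\<forall>i\<le>r. c i = 0)"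
  shows "\<forall>c :: nat \<Rightarrow> rat. (\<forall>j. (\<Sum>i\<in>{1..r}. c i * of_int (tau i j)) = 0) \<longrightarrow> (\<forall>i\<in>{1..r}. c i = 0)"
proof (intro allI impI)
  fix c :: "nat \<Rightarrow> rat"
  assume H: "\<forall>j. (\<Sum>i\<in>{1..r}. c i * of_int (tau i j)) = 0"
  define p where "p i = fst (quotient_of (c i))" for i
  define q where "q i = snd (quotient_of (c i))" for i
  have qpos: "q i > 0" for i unfolding q_def by (rule quotient_of_denom_pos')
  have cpq: "c i * of_int (q i) = of_int (p i)" for i
  proof -
    have "quotient_of (c i) = (p i, q i)" by (simp add: p_def q_def)
    then have "c i = of_int (p i) / of_int (q i)" by (rule quotient_of_div)
    then show ?thesis using qpos[of i] by simp
  qed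
  define D where "D = (\<Prod>i\<in>{1..r}. q i)"
  have Dpos: "D > 0" unfolding D_def by (rule prod_pos) (simp add: qpos)
  define d where "d i = p i * (\<Prod>i'\<in>{1..r} - {i}. q i')" for i
  have dD: "of_int (d i) = c i * of_int D" if "i \<in> {1..r}" for i
  proof -
    have "D = q i * (\<Prod>i'\<in>{1..r} - {i}. q i')"
      unfolding D_def using that by (simp add: prod.remove)
    then have "c i * of_int D = (c i * of_int (q i)) * of_int (\<Prod>i'\<in>{1..r} - {i}. q i')"
      by (simp add: mult_ac)
    also have "\<dots> = of_int (d i)" by (simp add: cpq d_def)
    finally show ?thesis by simp
  qed
  define c' where "c' i = (if i \<in> {1..r} then d i else 0)" for i
  have "\<forall>j. (\<Sum>i\<le>r. c' i * tau i j) = 0"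
  proof
    fix j
    have split: "{..r} = insert 0 {1..r}" by auto
    have "(\<Sum>i\<le>r. c' i * tau i j) = (\<Sum>i\<in>{1..r}. d i * tau i j)"
      unfolding split by (simp add: c'_def)
    moreover have "(of_int (\<Sum>i\<in>{1..r}. d i * tau i j) :: rat) = of_int D * (\<Sum>i\<in>{1..r}. c i * of_int (tau i j))"
      by (simp add: sum_distrib_left dD mult_ac)
    ultimately have "(of_int (\<Sum>i\<le>r. c' i * tau i j) :: rat) = 0" using H by simp
    then show "(\<Sum>i\<le>r. c' i * tau i j) = 0" by (simp only: of_int_eq_0_iff)
  qed
  then have c'0: "\<forall>i\<le>r. c' i = 0" using indep by blast
  show "\<forall>i\<in>{1..r}. c i = 0"
  proof
    fix i assume i: "i \<in> {1..r}"
    then have "d i = 0" using c'0 by (auto simp: c'_def)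
    then have "c i * of_int D = 0" using dD[OF i] by simp
    then show "c i = 0" using Dpos by simp
  qed
qed

lemma tele_transfer:
  fixes Phi :: "'k::field krat \<Rightarrow> 'k krat"
  assumes add: "\<And>x y. Phi (x + y) = Phi x + Phi y" and mult: "\<And>x y. Phi (x * y) = Phi x * Phi y"
    and inj0: "\<And>x. Phi x = 0 \<Longrightarrow> x = 0"
    and Kt: "\<And>x. x \<in> Kt \<Longrightarrow> Phi x \<in> Kt" and RFc: "\<And>x. x \<in> RF m \<Longrightarrow> Phi x \<in> RF m"
    and shc: "\<And>v (x :: 'k krat). x \<in> RF m \<Longrightarrow> shiftf v x \<in> RF m"
    and conj: "\<And>i g. i \<le> r \<Longrightarrow> g \<in> RF m \<Longrightarrow> Phi (shiftf (tau i) g) = shiftf (tau' i) (Phi g)"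
    and f: "f \<in> RF m" and T: "has_telescoper m r tau f"
  shows "has_telescoper m r tau' (Phi f)"
proof -
  have P0: "Phi 0 = 0"
  proof -
    have "Phi 0 + Phi 0 = Phi 0 + 0" using add[of 0 0] by (simp only: add_0_right)
    then show ?thesis by (simp only: add_left_cancel)
  qed
  have Pdiff: "Phi (x - y) = Phi x - Phi y" for x y
    using add[of "x - y" y] by (simp add: eq_diff_eq)
  have Psum: "Phi (sum g A) = (\<Sum>i\<in>A. Phi (g i))" for g :: "nat \<Rightarrow> 'k krat" and A
    by (induction A rule: infinite_finite_induct) (simp_all add: P0 add)
  have iter: "(shiftf (tau 0) ^^ l) f \<in> RF m \<and> Phi ((shiftf (tau 0) ^^ l) f) = (shiftf (tau' 0) ^^ l) (Phi f)" for l
  proof (induction l)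
    case 0 then show ?case using f by simp
  next
    case (Suc l)
    then show ?case using shc[of "(shiftf (tau 0) ^^ l) f" "tau 0"] conj[of 0 "(shiftf (tau 0) ^^ l) f"] by simp
  qed
  from T obtain \<rho> e h where e: "\<forall>l\<le>\<rho>. e l \<in> Kt" "\<exists>l\<le>\<rho>. e l \<noteq> 0"
    and h: "\<forall>i\<in>{1..r}. h i \<in> RF m"
    and eq: "(\<Sum>l\<le>\<rho>. e l * (shiftf (tau 0) ^^ l) f) = (\<Sum>i=1..r. shiftf (tau i) (h i) - h i)"
    unfolding has_telescoper_def summable_in_def by blast
  have "Phi (\<Sum>l\<le>\<rho>. e l * (shiftf (tau 0) ^^ l) f) = (\<Sum>l\<le>\<rho>. Phi (e l) * (shiftf (tau' 0) ^^ l) (Phi f))"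
    by (simp add: Psum mult iter)
  moreover have "Phi (\<Sum>i=1..r. shiftf (tau i) (h i) - h i) = (\<Sum>i=1..r. shiftf (tau' i) (Phi (h i)) - Phi (h i))"
    by (simp add: Psum Pdiff) (rule sum.cong, simp_all add: conj h)
  ultimately have eq': "(\<Sum>l\<le>\<rho>. Phi (e l) * (shiftf (tau' 0) ^^ l) (Phi f)) = (\<Sum>i=1..r. shiftf (tau' i) (Phi (h i)) - Phi (h i))"
    using eq by simp
  have a1: "\<forall>l\<le>\<rho>. Phi (e l) \<in> Kt" using e(1) Kt by blast
  have a2: "\<exists>l\<le>\<rho>. Phi (e l) \<noteq> 0" using e(2) inj0 by blast
  have a3: "\<forall>i\<in>{1..r}. Phi (h i) \<in> RF m" using h RFc by blast
  show ?thesis unfolding has_telescoper_def summable_in_def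
    by (intro exI[of _ \<rho>] exI[of _ "\<lambda>l. Phi (e l)"] conjI exI[of _ "\<lambda>i. Phi (h i)"] a1 a2 a3 eq')
qed

lemma conj_RF:
  assumes g1: "goodhom h1" and g2: "goodhom h2" and g3: "goodhom h3" and g4: "goodhom h4"
    and eq: "\<And>p. vars p \<subseteq> {0..m} \<Longrightarrow> h1 (h2 p) = h3 (h4 p)"
    and x: "x \<in> RF m"
  shows "liftf h1 (liftf h2 x) = liftf h3 (liftf h4 x)"
proof -
  from x obtain a b where ab: "b \<noteq> 0" "x = Fraction_Field.Fract a b" "vars a \<subseteq> {0..m}" "vars b \<subseteq> {0..m}"
    unfolding RF_def by blast
  have "h2 b \<noteq> 0" "h4 b \<noteq> 0" using ab(1) gh_nz[OF g2] gh_nz[OF g4] by auto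
  then show ?thesis using ab
    by (simp add: liftf_Fract[OF g2] liftf_Fract[OF g4] liftf_Fract[OF g1] liftf_Fract[OF g3] eq)
qed

theorem mainTheorem19:
  fixes m n r :: nat
    and tau :: "nat \<Rightarrow> nat \<Rightarrow> int"
  assumes "1 \<le> n" and "n \<le> m"
    and "1 \<le> r" and "r \<le> n"
    and inGt: "\<forall>i\<le>r. \<forall>j>n. tau i j = 0"
    and notG: "tau 0 0 \<noteq> 0"
    and inG: "\<forall>i\<in>{1..r}. tau i 0 = 0"
    and indep: "\<forall>c :: nat \<Rightarrow> int. (\<forall>j. (\<Sum>i\<le>r. c i * tau i j) = 0) \<longrightarrow> (\<forall>i\<le>r. c i = 0)"
  shows "\<exists>\<phi> :: 'k::field_char_0 krat \<Rightarrow> 'k krat.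
           K_automorphism m \<phi> \<and>
           (\<forall>g\<in>RF m. \<phi> (shiftf (tau 0) g) = shiftf (unitv 0) (\<phi> g)) \<and>
           (\<forall>i\<in>{1..r}. \<forall>g\<in>RF m. \<phi> (shiftf (tau i) g) = shiftf (unitv i) (\<phi> g)) \<and>
           (\<forall>f\<in>RF m. has_telescoper m r tau f \<longleftrightarrow> has_telescoper m r unitv (\<phi> f))"
proof -
  define w :: "nat \<Rightarrow> nat \<Rightarrow> rat" where "w i j = of_int (tau i j)" for i j
  have rm: "r \<le> m" using assms by simp
  have w00: "w 0 0 \<noteq> 0" using notG by (simp add: w_def)
  have supp: "\<forall>i\<le>r. \<forall>j>m. w i j = 0" using inGt assms(2) by (simp add: w_def)
  have z0: "\<forall>i\<in>{1..r}. w i 0 = 0" using inG by (simp add: w_def)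
  have ind: "\<forall>c. (\<forall>j. (\<Sum>i\<in>{1..r}. c i * w i j) = 0) \<longrightarrow> (\<forall>i\<in>{1..r}. c i = 0)"
    using rat_indep[OF indep] by (simp add: w_def)
  obtain A B where Aw: "\<forall>i\<le>r. \<forall>j. A j i = w i j" and A0: "\<forall>k\<in>{1..m}. A 0 k = 0"
    and B0: "\<forall>k\<in>{1..m}. B 0 k = 0"
    and AB: "\<forall>j\<le>m. \<forall>l\<le>m. (\<Sum>k\<le>m. A j k * B k l) = (if j = l then 1 else 0)"
    and BA: "\<forall>j\<le>m. \<forall>l\<le>m. (\<Sum>k\<le>m. B j k * A k l) = (if j = l then 1 else 0)"
    using linalg_matrix[OF rm w00 supp z0 ind] by blast
  define sA :: "nat \<Rightarrow> 'k kpoly" where "sA = sub m A"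
  define sB :: "nat \<Rightarrow> 'k kpoly" where "sB = sub m B"
  have invAB: "ev sB (sA j) = Var j" for j unfolding sA_def sB_def by (rule sub_inv[OF AB])
  have invBA: "ev sA (sB j) = Var j" for j unfolding sA_def sB_def by (rule sub_inv[OF BA])
  have ghA: "goodhom (ev sA)" by (rule goodhom_ev[OF invAB])
  have ghB: "goodhom (ev sB)" by (rule goodhom_ev[OF invBA])
  define \<phi> where "\<phi> = liftf (ev sA)"
  define \<psi> where "\<psi> = liftf (ev sB)"
  have psiphi: "\<psi> (\<phi> x) = x" for x
    unfolding \<phi>_def \<psi>_def liftf_comp[OF ghB ghA] by (rule liftf_id) (simp add: ev_inv[OF invAB])
  have phipsi: "\<phi> (\<psi> x) = x" for x
    unfolding \<phi>_def \<psi>_def liftf_comp[OF ghA ghB] by (rule liftf_id) (simp add: ev_inv[OF invBA])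
  have phiRF: "\<phi> x \<in> RF m" if "x \<in> RF m" for x
    unfolding \<phi>_def by (rule liftf_RF[OF ghA _ that]) (simp add: sA_def vars_ev_sub)
  have psiRF: "\<psi> x \<in> RF m" if "x \<in> RF m" for x
    unfolding \<psi>_def by (rule liftf_RF[OF ghB _ that]) (simp add: sB_def vars_ev_sub)
  have phiKt: "\<phi> x \<in> Kt" if "x \<in> Kt" for x
    unfolding \<phi>_def by (rule liftf_RF[OF ghA _ that]) (unfold sA_def, rule vars_ev_sub0[of m A, OF A0], assumption)
  have psiKt: "\<psi> x \<in> Kt" if "x \<in> Kt" for x
    unfolding \<psi>_def by (rule liftf_RF[OF ghB _ that]) (unfold sB_def, rule vars_ev_sub0[of m B, OF B0], assumption)
  have shRF: "shiftf v x \<in> RF m" if "x \<in> RF m" for v and x :: "'k krat"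
    unfolding shiftf_liftf by (rule liftf_RF[OF goodhom_shiftp _ that]) (rule vars_shiftp)
  have conj: "\<phi> (shiftf (tau i) g) = shiftf (unitv i) (\<phi> g)" if i: "i \<le> r" and g: "g \<in> RF m" for i g
  proof -
    have im: "i \<le> m" using i rm by simp
    have lin: "\<forall>j\<le>m. (\<Sum>k\<le>m. of_rat (A j k) * of_int (unitv i k)) = (of_int (tau i j) :: 'k)"
    proof (intro allI impI)
      fix j assume "j \<le> m"
      have "(\<Sum>k\<le>m. of_rat (A j k) * of_int (unitv i k)) = (\<Sum>k\<le>m. if k = i then (of_rat (A j k) :: 'k) else 0)"
        by (rule sum.cong) (simp_all add: unitv_def)
      also have "\<dots> = of_rat (A j i)" using im by (simp add: sum.delta)
      also have "\<dots> = of_int (tau i j)" using Aw i by (simp add: w_def)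
      finally show "(\<Sum>k\<le>m. of_rat (A j k) * of_int (unitv i k)) = (of_int (tau i j) :: 'k)" .
    qed
    show ?thesis unfolding \<phi>_def shiftf_liftf
      by (rule conj_RF[OF ghA goodhom_shiftp goodhom_shiftp ghA _ g])
         (simp add: sA_def ev_shift_comm[OF _ lin])
  qed
  have conj': "\<psi> (shiftf (unitv i) g) = shiftf (tau i) (\<psi> g)" if i: "i \<le> r" and g: "g \<in> RF m" for i g
  proof -
    have "\<phi> (shiftf (tau i) (\<psi> g)) = shiftf (unitv i) g"
      using conj[OF i psiRF[OF g]] phipsi by simp
    then show ?thesis using psiphi by metis
  qed
  have phi_add: "\<phi> (x + y) = \<phi> x + \<phi> y" for x y unfolding \<phi>_def by (rule liftf_add[OF ghA])
  have phi_mult: "\<phi> (x * y) = \<phi> x * \<phi> y" for x y unfolding \<phi>_def by (rule liftf_mult[OF ghA])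
  have psi_add: "\<psi> (x + y) = \<psi> x + \<psi> y" for x y unfolding \<psi>_def by (rule liftf_add[OF ghB])
  have psi_mult: "\<psi> (x * y) = \<psi> x * \<psi> y" for x y unfolding \<psi>_def by (rule liftf_mult[OF ghB])
  have phi_inj0: "\<phi> x = 0 \<Longrightarrow> x = 0" for x unfolding \<phi>_def by (rule liftf_inj0[OF ghA])
  have psi_inj0: "\<psi> x = 0 \<Longrightarrow> x = 0" for x unfolding \<psi>_def by (rule liftf_inj0[OF ghB])
  have Kaut: "K_automorphism m \<phi>"
    unfolding K_automorphism_def
  proof (intro conjI ballI allI)
    show "bij_betw \<phi> (RF m) (RF m)"
      by (rule bij_betw_byWitness[where f'=\<psi>]) (auto simp: psiphi phipsi phiRF psiRF)
  next
    fix a b show "\<phi> (a + b) = \<phi> a + \<phi> b" by (rule phi_add)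
  next
    fix a b show "\<phi> (a * b) = \<phi> a * \<phi> b" by (rule phi_mult)
  next
    fix c show "\<phi> (constf c) = constf c"
      unfolding \<phi>_def by (rule liftf_constf[OF ghA]) simp
  qed
  have tele: "has_telescoper m r tau f \<longleftrightarrow> has_telescoper m r unitv (\<phi> f)" if f: "f \<in> RF m" for f
  proof
    assume T: "has_telescoper m r tau f"
    show "has_telescoper m r unitv (\<phi> f)"
      by (rule tele_transfer[where Phi=\<phi> and tau'=unitv and tau=tau and f=f and m=m and r=r])
         (use phi_add phi_mult phi_inj0 phiKt phiRF shRF conj f T in auto)
  next
    assume T: "has_telescoper m r unitv (\<phi> f)"
    have "has_telescoper m r tau (\<psi> (\<phi> f))"
      by (rule tele_transfer[where Phi=\<psi> and tau'=tau and tau=unitv and f="\<phi> f" and m=m and r=r])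
         (use psi_add psi_mult psi_inj0 psiKt psiRF shRF conj' phiRF[OF f] T in auto)
    then show "has_telescoper m r tau f" by (simp add: psiphi)
  qed
  show ?thesis
    using Kaut conj tele rm by (intro exI[of _ \<phi>] conjI) auto
qed

end
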